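(* Let $d\ge1$ and $n>1$ be integers with prime factorization $n=p_1^{\alpha_1}\cdots p_s^{\alpha_s}$, and put $t=\prod_{i=1}^s p_i^{\alpha_i+\lfloor\log_{p_i} d\rfloor}$. Then for every (closed) simplex $\Delta\subset\mathbb{R}^d$ of any dimension whose vertices lie in $\mathbb{Z}^d$, the number of points of $\mathbb{Z}^d$ in $t\Delta$ is congruent to $1$ modulo $n$.
   Context: For a set $X\subseteq\mathbb{R}^d$ and $t>0$, $tX=\{tx : x\in X\}$ denotes the image of $X$ under the homothety with center at the origin and ratio $t$. $\lfloor x\rfloor$ denotes the integer part of $x$. *)

theory Defs
  imports "HOL-Analysis.Analysis" "HOL-Computational_Algebra.Primes"
begin

definition lattice_points :: "(real ^ 'd) set" where
  "lattice_points = {x. \<forall>i. x $ i \<in> \<int>}"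

definition scale_t :: "nat \<Rightarrow> nat \<Rightarrow> nat" where
  "scale_t d n = (\<Prod>p\<in>prime_factors n.
      p ^ (multiplicity p n + nat \<lfloor>log (real p) (real d)\<rfloor>))"

end

theory Submission
  imports Defs
begin


lemma d_lt_pow:
  fixes p d :: nat
  assumes "prime p" "d \<ge> 1"
  shows "d < p ^ (nat \<lfloor>log (real p) (real d)\<rfloor> + 1)"
proof -
  have p1: "real p > 1" using assms prime_gt_1_nat by auto
  have l0: "log (real p) (real d) \<ge> 0" using p1 assms by simp
  have "log (real p) (real d) < real (nat \<lfloor>log (real p) (real d)\<rfloor> + 1)"
    using l0 by linarith
  then have "real d < real p powr real (nat \<lfloor>log (real p) (real d)\<rfloor> + 1)"
    using log_less_iff[OF p1] assms by simp
  also have "\<dots> = real p ^ (nat \<lfloor>log (real p) (real d)\<rfloor> + 1)"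
    by (rule powr_realpow) (use p1 in simp)
  also have "\<dots> = real (p ^ (nat \<lfloor>log (real p) (real d)\<rfloor> + 1))"
    by simp
  finally show ?thesis by linarith
qed

lemma scale_t_dvd_binom:
  fixes n d i :: nat
  assumes n1: "n > 1" and d1: "d \<ge> 1" and i1: "1 \<le> i" and id: "i \<le> d"
  shows "n dvd (scale_t d n choose i)"
proof (cases "scale_t d n choose i = 0")
  case True then show ?thesis by (metis dvd_0_right)
next
  case False
  define t where "t = scale_t d n"
  have Cne: "t choose i \<noteq> 0" using False t_def by simp
  show ?thesis unfolding t_def[symmetric]
  proof (rule multiplicity_le_imp_dvd)
    show "n \<noteq> 0" using n1 by simp
    fix p :: nat assume pp: "prime p"
    show "multiplicity p n \<le> multiplicity p (t choose i)"
    proof (cases "p dvd n")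
      case False
      then have "multiplicity p n = 0" by (rule not_dvd_imp_multiplicity_0)
      then show ?thesis by simp
    next
      case True
      define a where "a = multiplicity p n"
      define e where "e = nat \<lfloor>log (real p) (real d)\<rfloor>"
      have pf: "p \<in> prime_factors n" using True pp n1 by (auto simp: in_prime_factors_iff)
      have "p ^ (a + e) dvd t" unfolding t_def scale_t_def a_def e_def
        by (rule dvd_prodI[where f="\<lambda>p. p ^ (multiplicity p n + nat \<lfloor>log (real p) (real d)\<rfloor>)"]) (use pf in auto)
      then have "p ^ (a + e) dvd i * (t choose i)"
        using times_binomial_minus1_eq[of i t] i1 by (simp add: dvd_mult2)
      then have m1: "a + e \<le> multiplicity p (i * (t choose i))"
        using multiplicity_geI[of "i * (t choose i)" p "a + e"] i1 Cne pp prime_gt_1_nat[OF pp] by auto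
      have m2: "multiplicity p (i * (t choose i)) = multiplicity p i + multiplicity p (t choose i)"
        using prime_elem_multiplicity_mult_distrib[of p i "t choose i"] pp i1 Cne by simp
      have m3: "multiplicity p i \<le> e"
      proof (rule ccontr)
        assume "\<not> multiplicity p i \<le> e"
        then have "e + 1 \<le> multiplicity p i" by simp
        then have "p ^ (e + 1) dvd i" by (rule multiplicity_dvd')
        then have "p ^ (e + 1) \<le> i" using i1 by (simp add: dvd_imp_le)
        with d_lt_pow[OF pp d1] id show False unfolding e_def by simp
      qed
      show ?thesis unfolding a_def[symmetric] using m1 m2 m3 by simp
    qed
  qed
qed

lemma binom_cong:
  fixes n d j k :: nat
  assumes n1: "n > 1" and d1: "d \<ge> 1" and kd: "k \<le> d"
  shows "((scale_t d n + j) choose k) mod n = (j choose k) mod n"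
proof -
  define t where "t = scale_t d n"
  have "(t + j) choose k = (\<Sum>i\<le>k. (t choose i) * (j choose (k - i)))"
    by (simp add: vandermonde)
  also have "\<dots> = (j choose k) + (\<Sum>i\<in>{1..k}. (t choose i) * (j choose (k - i)))"
  proof -
    have "{..k} = insert 0 {1..k}" by auto
    then show ?thesis by simp
  qed
  finally have eq: "(t + j) choose k = (j choose k) + (\<Sum>i\<in>{1..k}. (t choose i) * (j choose (k - i)))" .
  have "n dvd (\<Sum>i\<in>{1..k}. (t choose i) * (j choose (k - i)))"
    by (rule dvd_sum) (use scale_t_dvd_binom[OF n1 d1] kd in \<open>auto simp: t_def\<close>)
  then obtain c where c: "(\<Sum>i\<in>{1..k}. (t choose i) * (j choose (k - i))) = n * c" by blast
  have "(t + j) choose k = (j choose k) + n * c" using eq c by simp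
  then show ?thesis unfolding t_def[symmetric] by simp
qed



lemma lattice_add: "x \<in> lattice_points \<Longrightarrow> y \<in> lattice_points \<Longrightarrow> x + y \<in> lattice_points"
  by (auto simp: lattice_points_def)

lemma lattice_zero: "0 \<in> lattice_points"
  by (auto simp: lattice_points_def)

lemma lattice_scale: "c \<in> \<int> \<Longrightarrow> x \<in> lattice_points \<Longrightarrow> c *\<^sub>R x \<in> lattice_points"
  by (auto simp: lattice_points_def)

lemma lattice_sum:
  assumes "finite A" "\<And>v. v \<in> A \<Longrightarrow> c v \<in> \<int>" "A \<subseteq> lattice_points"
  shows "(\<Sum>v\<in>A. c v *\<^sub>R v) \<in> lattice_points"
  using assms
proof (induction A rule: finite_induct)
  case empty then show ?case by (simp add: lattice_zero)
next
  case (insert a A)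
  then show ?case by (simp add: lattice_add lattice_scale)
qed

lemma lattice_bounded_finite:
  fixes S :: "(real ^ 'd) set"
  assumes "bounded S"
  shows "finite (S \<inter> lattice_points)"
proof -
  obtain B where B: "\<And>x. x \<in> S \<Longrightarrow> norm x \<le> B" using assms bounded_iff by blast
  define c where "c = \<lceil>B\<rceil>"
  have "S \<inter> lattice_points \<subseteq> (\<lambda>g. \<chi> i. real_of_int (g i)) ` (PiE UNIV (\<lambda>_. {-c..c}))"
  proof
    fix x assume x: "x \<in> S \<inter> lattice_points"
    define g where "g = (\<lambda>i. \<lfloor>x $ i\<rfloor>)"
    have xi: "x $ i = real_of_int (g i)" for i
      using x by (auto simp: lattice_points_def g_def)
    have xS: "x \<in> S" using x by blast
    have "\<bar>x $ i\<bar> \<le> B" for i using component_le_norm_cart[of x i] B[OF xS] by linarith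
    then have a: "\<bar>real_of_int (g i)\<bar> \<le> B" for i using xi by metis
    have "g i \<le> c" for i unfolding c_def using a[of i] le_of_int_ceiling[of B]
      by (smt (verit) of_int_le_iff)
    moreover have "- c \<le> g i" for i unfolding c_def using a[of i] le_of_int_ceiling[of B]
      by (smt (verit) of_int_le_iff of_int_minus)
    ultimately have "g i \<in> {-c..c}" for i by auto
    then have "g \<in> PiE UNIV (\<lambda>_. {-c..c})" by auto
    moreover have "x = (\<chi> i. real_of_int (g i))" using xi by (simp add: vec_eq_iff)
    ultimately show "x \<in> (\<lambda>g. \<chi> i. real_of_int (g i)) ` (PiE UNIV (\<lambda>_. {-c..c}))" by blast
  qed
  moreover have "finite (PiE (UNIV :: 'd set) (\<lambda>_. {-c..c}))" by (rule finite_PiE) auto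
  ultimately show ?thesis using finite_subset by blast
qed



lemma frac_nat_add: "0 \<le> y \<Longrightarrow> y < 1 \<Longrightarrow> frac (real k + y) = y"
  by (metis frac_add_of_int_left frac_eq of_int_of_nat_eq)

lemma floor_nat_add: "0 \<le> y \<Longrightarrow> y < 1 \<Longrightarrow> \<lfloor>real k + y\<rfloor> = int k"
  by (rule floor_unique) auto

lemma count_decomp:
  fixes C :: "(real ^ 'd) set" and t :: nat
  assumes finC: "finite C" and neC: "C \<noteq> {}" and indep: "\<not> affine_dependent C"
    and CL: "C \<subseteq> lattice_points" and tpos: "t > 0"
  shows "\<exists>(F::((real^'d) \<Rightarrow> real) set) rn. finite F \<and> card ((\<lambda>x. real t *\<^sub>R x) ` (convex hull C) \<inter> lattice_points)
      = (\<Sum>f\<in>F. (t - rn f + card C - 1) choose (t - rn f))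
      \<and> (\<forall>f\<in>F. rn f < card C \<and> rn f \<le> t) \<and> (\<exists>f0\<in>F. rn f0 = 0 \<and> (\<forall>f\<in>F. rn f = 0 \<longrightarrow> f = f0))"
proof -
  define T where "T = real t"
  define S where "S = (\<lambda>x. T *\<^sub>R x) ` (convex hull C) \<inter> lattice_points"
  define K where "K = card C"
  define rep where "rep = (\<lambda>\<mu> x. (\<forall>v\<in>C. 0 \<le> \<mu> v) \<and> sum \<mu> C = T \<and> (\<Sum>v\<in>C. \<mu> v *\<^sub>R v) = x)"
  have Tpos: "T > 0" using tpos T_def by simp
  have memS: "x \<in> S \<longleftrightarrow> x \<in> lattice_points \<and> (\<exists>\<mu>. rep \<mu> x)" for x
  proof
    assume "x \<in> S"
    then obtain y where y: "y \<in> convex hull C" "x = T *\<^sub>R y" "x \<in> lattice_points"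
      unfolding S_def by blast
    then obtain u where u: "\<forall>v\<in>C. 0 \<le> u v" "sum u C = 1" "(\<Sum>v\<in>C. u v *\<^sub>R v) = y"
      using convex_hull_finite[OF finC] by auto
    have "rep (\<lambda>v. T * u v) x" unfolding rep_def
      using u y Tpos by (auto simp: sum_distrib_left[symmetric] scaleR_sum_right)
    then show "x \<in> lattice_points \<and> (\<exists>\<mu>. rep \<mu> x)" using y by blast
  next
    assume "x \<in> lattice_points \<and> (\<exists>\<mu>. rep \<mu> x)"
    then obtain \<mu> where L: "x \<in> lattice_points" and r: "rep \<mu> x" by blast
    have "(1/T) *\<^sub>R x \<in> convex hull C"
      unfolding convex_hull_finite[OF finC]
    proof (intro CollectI exI[of _ "\<lambda>v. \<mu> v / T"] conjI)
      show "\<forall>v\<in>C. 0 \<le> \<mu> v / T" using r Tpos unfolding rep_def by auto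
      show "sum (\<lambda>v. \<mu> v / T) C = 1" using r Tpos unfolding rep_def
        by (simp add: sum_divide_distrib[symmetric])
      show "(\<Sum>v\<in>C. (\<mu> v / T) *\<^sub>R v) = (1/T) *\<^sub>R x" using r unfolding rep_def
        by (auto simp: scaleR_sum_right)
    qed
    moreover have "x = T *\<^sub>R ((1/T) *\<^sub>R x)" using Tpos by simp
    ultimately show "x \<in> S" unfolding S_def using L by blast
  qed
  have uniq: "\<mu> v = \<nu> v" if r: "rep \<mu> x" "rep \<nu> x" "v \<in> C" for \<mu> \<nu> x v
  proof (rule ccontr)
    assume ne: "\<mu> v \<noteq> \<nu> v"
    have "sum (\<lambda>w. \<mu> w - \<nu> w) C = 0" using r unfolding rep_def by (simp add: sum_subtractf)
    moreover have "(\<Sum>w\<in>C. (\<mu> w - \<nu> w) *\<^sub>R w) = 0" using r unfolding rep_def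
      by (simp add: scaleR_diff_left sum_subtractf)
    ultimately have "affine_dependent C" using r(3) ne
      unfolding affine_dependent_explicit_finite[OF finC] by (intro exI[of _ "\<lambda>w. \<mu> w - \<nu> w"]) auto
    then show False using indep by blast
  qed
  define mu where "mu x = (SOME \<mu>. rep \<mu> x)" for x
  have mu_rep: "rep (mu x) x" if "x \<in> S" for x
    using memS[of x] that unfolding mu_def by (metis someI_ex)
  have mu_nonneg: "0 \<le> mu x v" if "x \<in> S" "v \<in> C" for x v
    using mu_rep[OF that(1)] that(2) unfolding rep_def by blast
  have mu_sum: "sum (mu x) C = T" if "x \<in> S" for x
    using mu_rep[OF that] unfolding rep_def by blast
  have mu_comb: "(\<Sum>v\<in>C. mu x v *\<^sub>R v) = x" if "x \<in> S" for x
    using mu_rep[OF that] unfolding rep_def by blast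
  have mu_eq: "mu x v = \<mu> v" if "x \<in> S" "rep \<mu> x" "v \<in> C" for x \<mu> v
    using uniq mu_rep that by blast
  have S_fin: "finite S"
  proof -
    have "bounded ((\<lambda>x. T *\<^sub>R x) ` (convex hull C))"
      by (rule bounded_scaling) (rule finite_imp_bounded_convex_hull[OF finC])
    then show ?thesis unfolding S_def by (rule lattice_bounded_finite)
  qed
  define fr where "fr x = (\<lambda>v. if v \<in> C then frac (mu x v) else 0)" for x
  define F where "F = fr ` S"
  define R where "R f = sum f C" for f :: "real^'d \<Rightarrow> real"
  define rn where "rn f = nat \<lfloor>R f\<rfloor>" for f
  have fr_decomp: "mu x v = of_int \<lfloor>mu x v\<rfloor> + fr x v" if "v \<in> C" for x v
    using that by (simp add: fr_def frac_def)
  have Rprops: "R f = real (rn f) \<and> rn f < K \<and> rn f \<le> t \<and> (rn f = 0 \<longleftrightarrow> (\<forall>v. f v = 0))"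
    if fF: "f \<in> F" for f
  proof -
    obtain x where x: "x \<in> S" "f = fr x" using fF unfolding F_def by blast
    have f01: "0 \<le> f v \<and> f v < 1" for v using x(2) by (simp add: fr_def frac_lt_1)
    have fout: "v \<notin> C \<Longrightarrow> f v = 0" for v using x(2) by (simp add: fr_def)
    have "R f = (\<Sum>v\<in>C. mu x v - of_int \<lfloor>mu x v\<rfloor>)"
      unfolding R_def using fr_decomp x(2) by (intro sum.cong) (auto, metis add_diff_cancel_left')
    also have "\<dots> = T - (\<Sum>v\<in>C. of_int \<lfloor>mu x v\<rfloor>)"
      by (simp add: sum_subtractf mu_sum[OF x(1)])
    finally have Req: "R f = T - (\<Sum>v\<in>C. of_int \<lfloor>mu x v\<rfloor>)" .
    have Rint: "R f \<in> \<int>" unfolding Req T_def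
      by (intro Ints_diff Ints_sum) auto
    have Rnn: "0 \<le> R f" unfolding R_def using f01 by (simp add: sum_nonneg)
    have Rrn: "R f = real (rn f)"
    proof -
      obtain z where z: "R f = of_int z" using Rint Ints_cases by blast
      then have "z \<ge> 0" using Rnn by simp
      then show ?thesis unfolding rn_def z by simp
    qed
    have "R f < (\<Sum>v\<in>C. 1)" unfolding R_def
      by (rule sum_strict_mono[OF finC neC]) (use f01 in auto)
    then have rK: "rn f < K" using Rrn unfolding K_def by simp
    have "R f \<le> sum (mu x) C" unfolding R_def
    proof (rule sum_mono)
      fix v assume v: "v \<in> C"
      have h: "0 \<le> real_of_int \<lfloor>mu x v\<rfloor>" using mu_nonneg[OF x(1) v] by simp
      show "f v \<le> mu x v" unfolding x(2) using fr_decomp[OF v, of x] h by linarith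
    qed
    then have rt: "rn f \<le> t" using Rrn mu_sum[OF x(1)] unfolding T_def by simp
    have "rn f = 0 \<longleftrightarrow> R f = 0" using Rrn by simp
    also have "\<dots> \<longleftrightarrow> (\<forall>v\<in>C. f v = 0)" unfolding R_def
      by (rule sum_nonneg_eq_0_iff[OF finC]) (use f01 in auto)
    also have "\<dots> \<longleftrightarrow> (\<forall>v. f v = 0)" using fout by blast
    finally show ?thesis using Rrn rK rt by blast
  qed
  obtain v0 where v0: "v0 \<in> C" using neC by blast
  have zeroF: "(\<lambda>_. 0) \<in> F"
  proof -
    define x0 where "x0 = T *\<^sub>R v0"
    define \<mu>0 where "\<mu>0 = (\<lambda>v. if v = v0 then T else 0)"
    have c0: "(\<Sum>v\<in>C. \<mu>0 v *\<^sub>R v) = (\<Sum>v\<in>C. if v = v0 then T *\<^sub>R v else 0)"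
      by (rule sum.cong) (auto simp: \<mu>0_def)
    have r0: "rep \<mu>0 x0" unfolding rep_def c0 unfolding \<mu>0_def x0_def using Tpos v0 finC
      by (auto simp: sum.delta)
    have "x0 \<in> lattice_points" unfolding x0_def T_def using CL v0
      by (intro lattice_scale) auto
    then have x0S: "x0 \<in> S" using memS r0 by blast
    have "fr x0 = (\<lambda>_. 0)"
    proof
      fix v show "fr x0 v = 0"
        using mu_eq[OF x0S r0] unfolding fr_def \<mu>0_def T_def by auto
    qed
    then show ?thesis unfolding F_def using x0S by force
  qed
  have cardS: "card S = (\<Sum>f\<in>F. card {x \<in> S. fr x = f})"
    unfolding F_def using sum.image_gen[OF S_fin, of "\<lambda>x. 1::nat" fr] by simp
  obtain xs where xs: "distinct xs" "set xs = C" using finite_distinct_list[OF finC] by blast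
  have lenxs: "length xs = K" unfolding K_def using xs distinct_card by fastforce
  have fib: "card {x \<in> S. fr x = f} = (t - rn f + K - 1) choose (t - rn f)" if fF: "f \<in> F" for f
  proof -
    obtain x0 where x0: "x0 \<in> S" "f = fr x0" using fF unfolding F_def by blast
    define N where "N = t - rn f"
    have RN: "R f + real N = T" using Rprops[OF fF] unfolding N_def T_def by auto
    have f01: "0 \<le> f v \<and> f v < 1" for v using x0(2) by (simp add: fr_def frac_lt_1)
    have fout: "v \<notin> C \<Longrightarrow> f v = 0" for v using x0(2) by (simp add: fr_def)
    define Fib where "Fib = {x \<in> S. fr x = f}"
    define g where "g x = map (\<lambda>v. nat \<lfloor>mu x v\<rfloor>) xs" for x
    have decomp: "mu x v = of_int \<lfloor>mu x v\<rfloor> + f v" if "x \<in> Fib" "v \<in> C" for x v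
      using fr_decomp[OF that(2), of x] that(1) unfolding Fib_def by auto
    have fl_nn: "0 \<le> \<lfloor>mu x v\<rfloor>" if "x \<in> Fib" "v \<in> C" for x v
      using mu_nonneg[of x v] that unfolding Fib_def by auto
    have inj: "inj_on g Fib"
    proof (rule inj_onI)
      fix x y assume x: "x \<in> Fib" and y: "y \<in> Fib" and gxy: "g x = g y"
      have eq: "mu x v = mu y v" if v: "v \<in> C" for v
      proof -
        have "nat \<lfloor>mu x v\<rfloor> = nat \<lfloor>mu y v\<rfloor>" using gxy v xs unfolding g_def by (simp add: map_eq_conv)
        then have "\<lfloor>mu x v\<rfloor> = \<lfloor>mu y v\<rfloor>" using fl_nn[OF x v] fl_nn[OF y v] by (metis nat_0_le)
        then show ?thesis using decomp[OF x v] decomp[OF y v] by simp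
      qed
      have "x = (\<Sum>v\<in>C. mu x v *\<^sub>R v)" using mu_comb x unfolding Fib_def by auto
      also have "\<dots> = (\<Sum>v\<in>C. mu y v *\<^sub>R v)" using eq by (intro sum.cong) auto
      also have "\<dots> = y" using mu_comb y unfolding Fib_def by auto
      finally show "x = y" .
    qed
    have img: "g ` Fib = {l. length l = K \<and> sum_list l = N}"
    proof
      show "g ` Fib \<subseteq> {l. length l = K \<and> sum_list l = N}"
      proof
        fix l assume "l \<in> g ` Fib"
        then obtain x where x: "x \<in> Fib" "l = g x" by blast
        have "sum_list l = (\<Sum>v\<in>C. nat \<lfloor>mu x v\<rfloor>)"
          using x xs unfolding g_def by (simp add: sum_list_distinct_conv_sum_set)
        moreover have "real (\<Sum>v\<in>C. nat \<lfloor>mu x v\<rfloor>) = real N"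
        proof -
          have "real (\<Sum>v\<in>C. nat \<lfloor>mu x v\<rfloor>) = (\<Sum>v\<in>C. mu x v - f v)"
            unfolding of_nat_sum
            by (intro sum.cong refl) (use decomp[OF x(1)] fl_nn[OF x(1)] in \<open>auto, metis add_diff_cancel_right' of_nat_nat\<close>)
          also have "\<dots> = T - R f" unfolding R_def
            using mu_sum x(1) unfolding Fib_def by (simp add: sum_subtractf)
          finally show ?thesis using RN by simp
        qed
        ultimately show "l \<in> {l. length l = K \<and> sum_list l = N}"
          using x lenxs unfolding g_def by (simp only: of_nat_eq_iff) simp
      qed
    next
      show "{l. length l = K \<and> sum_list l = N} \<subseteq> g ` Fib"
      proof
        fix l assume "l \<in> {l. length l = K \<and> sum_list l = N}"
        then have l: "length l = K" "sum_list l = N" by auto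
        define a where "a v = the (map_of (zip xs l) v)" for v
        have mapa: "map a xs = l"
        proof (rule nth_equalityI)
          show "length (map a xs) = length l" using l lenxs by simp
          fix i assume "i < length (map a xs)"
          then show "map a xs ! i = l ! i"
            using map_of_zip_nth[of xs l i] xs l lenxs unfolding a_def by simp
        qed
        have suma: "(\<Sum>v\<in>C. a v) = N"
          using l mapa xs by (metis sum_list_distinct_conv_sum_set)
        define \<mu> where "\<mu> v = real (a v) + f v" for v
        define x where "x = (\<Sum>v\<in>C. \<mu> v *\<^sub>R v)"
        have sum\<mu>: "sum \<mu> C = T"
        proof -
          have "sum \<mu> C = real (\<Sum>v\<in>C. a v) + R f"
            unfolding \<mu>_def R_def by (simp add: sum.distrib)
          then show ?thesis using suma RN by simp
        qed
        have r: "rep \<mu> x" unfolding rep_def x_def using sum\<mu> f01 unfolding \<mu>_def by auto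
        have x0F: "x0 \<in> Fib" unfolding Fib_def using x0 by auto
        have x0L: "x0 \<in> lattice_points" using x0(1) memS by blast
        have "x = x0 + (x - x0)" by simp
        also have "x - x0 = (\<Sum>v\<in>C. (\<mu> v - mu x0 v) *\<^sub>R v)"
          unfolding x_def using mu_comb[OF x0(1)]
          by (simp add: scaleR_diff_left sum_subtractf)
        finally have xeq: "x = x0 + (\<Sum>v\<in>C. (\<mu> v - mu x0 v) *\<^sub>R v)" .
        have "(\<Sum>v\<in>C. (\<mu> v - mu x0 v) *\<^sub>R v) \<in> lattice_points"
        proof (rule lattice_sum[OF finC _ CL])
          fix v assume v: "v \<in> C"
          have "\<mu> v - mu x0 v = real (a v) - of_int \<lfloor>mu x0 v\<rfloor>"
            using decomp[OF x0F v] unfolding \<mu>_def by simp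
          then show "\<mu> v - mu x0 v \<in> \<int>" by simp
        qed
        then have xL: "x \<in> lattice_points" using xeq x0L lattice_add by simp
        then have xS: "x \<in> S" using memS r by blast
        have mux: "mu x v = \<mu> v" if "v \<in> C" for v using mu_eq[OF xS r that] .
        have "fr x = f"
        proof
          fix v show "fr x v = f v"
            using mux[of v] fout[of v] f01[of v] unfolding fr_def \<mu>_def by (auto simp: frac_nat_add)
        qed
        then have xF: "x \<in> Fib" unfolding Fib_def using xS by simp
        have "g x = map a xs" unfolding g_def
        proof (rule map_cong[OF refl])
          fix v assume "v \<in> set xs"
          then have v: "v \<in> C" using xs by simp
          have "\<lfloor>f v\<rfloor> = 0" using f01[of v] by (intro floor_unique) auto
          then show "nat \<lfloor>mu x v\<rfloor> = a v" using mux[OF v] unfolding \<mu>_def by simp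
        qed
        then have "l = g x" using mapa by simp
        then show "l \<in> g ` Fib" using xF by (rule image_eqI)
      qed
    qed
    have "card Fib = card (g ` Fib)" using card_image[OF inj] by simp
    also have "\<dots> = (N + K - 1) choose N" unfolding img by (rule card_length_sum_list)
    finally show ?thesis unfolding Fib_def N_def .
  qed
  show ?thesis
  proof (intro exI[of _ F] exI[of _ rn] conjI)
    show "finite F" unfolding F_def using S_fin by simp
    show "card ((\<lambda>x. real t *\<^sub>R x) ` (convex hull C) \<inter> lattice_points)
      = (\<Sum>f\<in>F. (t - rn f + card C - 1) choose (t - rn f))"
      using cardS fib unfolding S_def T_def K_def by simp
    show "\<forall>f\<in>F. rn f < card C \<and> rn f \<le> t" using Rprops unfolding K_def by blast
    show "\<exists>f0\<in>F. rn f0 = 0 \<and> (\<forall>f\<in>F. rn f = 0 \<longrightarrow> f = f0)"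
    proof (intro bexI[OF _ zeroF] conjI ballI impI)
      show "rn (\<lambda>_. 0) = 0" unfolding rn_def R_def by simp
      fix f assume "f \<in> F" "rn f = 0"
      then show "f = (\<lambda>_. 0)" using Rprops by auto
    qed
  qed
qed



theorem mainTheorem4:
  fixes C :: "(real ^ 'd) set" and n :: nat
  assumes "n > 1"
    and "finite C" and "C \<noteq> {}" and "\<not> affine_dependent C"
    and "C \<subseteq> lattice_points"
  shows "card ((\<lambda>x. real (scale_t CARD('d) n) *\<^sub>R x) ` (convex hull C) \<inter> lattice_points) mod n = 1"
proof -
  note n1 = assms(1) and finC = assms(2) and neC = assms(3) and indep = assms(4) and CL = assms(5)
  define d where "d = CARD('d)"
  define t where "t = scale_t d n"
  define K where "K = card C"
  have d1: "d \<ge> 1" unfolding d_def using zero_less_card_finite[where 'a='d] by linarith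
  have tpos: "t > 0" unfolding t_def scale_t_def
    by (rule prod_pos) (auto simp: in_prime_factors_iff prime_gt_0_nat)
  have "int K = aff_dim C + 1" unfolding K_def using aff_dim_affine_independent[OF indep] by simp
  moreover have "aff_dim C \<le> int d" using aff_dim_le_DIM[of C] unfolding d_def by simp
  ultimately have Kd: "K \<le> d + 1" by linarith
  have K1: "K \<ge> 1" unfolding K_def using finC neC by (simp add: Suc_le_eq card_gt_0_iff)
  obtain F :: "((real^'d) \<Rightarrow> real) set" and rn where
    finF: "finite F" and
    cardeq: "card ((\<lambda>x. real t *\<^sub>R x) ` (convex hull C) \<inter> lattice_points)
      = (\<Sum>f\<in>F. (t - rn f + card C - 1) choose (t - rn f))" and
    rnb: "\<forall>f\<in>F. rn f < card C \<and> rn f \<le> t" and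
    f0: "\<exists>f0\<in>F. rn f0 = 0 \<and> (\<forall>f\<in>F. rn f = 0 \<longrightarrow> f = f0)"
    using count_decomp[OF finC neC indep CL tpos] by blast
  obtain f0 where f0F: "f0 \<in> F" and rn0: "rn f0 = 0" and f0u: "\<And>f. f \<in> F \<Longrightarrow> rn f = 0 \<Longrightarrow> f = f0"
    using f0 by blast
  have cmod: "((t - rn f + K - 1) choose (t - rn f)) mod n = (if f = f0 then 1 else 0)" if fF: "f \<in> F" for f
  proof -
    define r where "r = rn f"
    have rK: "r < K" and rt: "r \<le> t" using rnb fF unfolding r_def K_def by auto
    have "(t - r + K - 1) choose (t - r) = (t + (K - 1 - r)) choose (K - 1)"
    proof -
      have e: "t - r + K - 1 = t + (K - 1 - r)" using rK rt by simp
      have "(t + (K - 1 - r)) choose (t - r) = (t + (K - 1 - r)) choose (t + (K - 1 - r) - (t - r))"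
        by (rule binomial_symmetric) simp
      also have "t + (K - 1 - r) - (t - r) = K - 1" using rK rt by simp
      finally show ?thesis unfolding e .
    qed
    moreover have "((t + (K - 1 - r)) choose (K - 1)) mod n = ((K - 1 - r) choose (K - 1)) mod n"
      unfolding t_def by (rule binom_cong[OF n1 d1]) (use Kd in simp)
    moreover have "((K - 1 - r) choose (K - 1)) mod n = (if f = f0 then 1 else 0)"
    proof (cases "r = 0")
      case True
      then have "f = f0" using f0u fF unfolding r_def by blast
      then show ?thesis using True n1 by simp
    next
      case False
      then have "f \<noteq> f0" using rn0 unfolding r_def by auto
      moreover have "K - 1 - r < K - 1" using False rK by simp
      ultimately show ?thesis by (simp add: binomial_eq_0)
    qed
    ultimately show ?thesis unfolding r_def by simp
  qed
  have "card ((\<lambda>x. real t *\<^sub>R x) ` (convex hull C) \<inter> lattice_points) mod n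
      = (\<Sum>f\<in>F. ((t - rn f + K - 1) choose (t - rn f)) mod n) mod n"
    unfolding cardeq K_def by (rule mod_sum_eq[symmetric])
  also have "\<dots> = (\<Sum>f\<in>F. (if f = f0 then 1 else 0)) mod n"
    by (intro arg_cong[where f="\<lambda>x. x mod n"] sum.cong refl cmod)
  also have "\<dots> = 1" using finF f0F n1 by (simp add: sum.delta)
  finally show ?thesis unfolding t_def d_def .
qed

end
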